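(* Let $N_t, K \ge 1$ be integers, let $\boldsymbol{h}_1,\dots,\boldsymbol{h}_K \in \mathbb{C}^{N_t\times 1}$, and let $\Gamma \ge 0$ and $P>0$. Consider the convex problem $$(\mathrm{P1.1}):\quad \min_{\boldsymbol{S}_x \succeq \boldsymbol{0}} \ \mathrm{tr}(\boldsymbol{S}_x^{-1}) \quad \text{s.t.}\quad \boldsymbol{h}_k^H \boldsymbol{S}_x \boldsymbol{h}_k \ge \Gamma\ \ \forall k\in\{1,\dots,K\},\qquad \mathrm{tr}(\boldsymbol{S}_x)\le P,$$ where $\mathrm{tr}(\boldsymbol{S}_x^{-1})$ is interpreted as $+\infty$ if $\boldsymbol{S}_x$ is singular, and assume (P1.1) is strictly feasible (Slater's condition holds). Let $\lambda\ge 0$ be the dual variable associated with the constraint $\mathrm{tr}(\boldsymbol{S}_x)\le P$ and $\mu_k\ge 0$ the dual variable associated with the constraint $\boldsymbol{h}_k^H\boldsymbol{S}_x\boldsymbol{h}_k\ge\Gamma$, so that the Lagrangian is $$\mathcal{L}(\boldsymbol{S}_x,\lambda,\{\mu_k\}) = \mathrm{tr}(\boldsymbol{S}_x^{-1}) + \Gamma\sum_{k=1}^K\mu_k + \mathrm{tr}\Big(\big(\lambda\boldsymbol{I}-\sum_{k=1}^K \mu_k\boldsymbol{h}_k\boldsymbol{h}_k^H\big)\boldsymbol{S}_x\Big) - \lambda P,$$ the dual function is $g(\lambda,\{\mu_k\}) = \inf_{\boldsymbol{S}_x\succeq\boldsymbol{0}}\mathcal{L}(\boldsymbol{S}_x,\lambda,\{\mu_k\})$,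 and the dual problem is to maximize $g$ over $\lambda\ge0$, $\mu_k\ge0$. Let $\lambda^{\mathrm{opt}}$, $\{\mu_k^{\mathrm{opt}}\}$ be an optimal solution of this dual problem and define $\boldsymbol{A}(\lambda^{\mathrm{opt}},\{\mu_k^{\mathrm{opt}}\}) = \lambda^{\mathrm{opt}}\boldsymbol{I} - \sum_{k=1}^K\mu_k^{\mathrm{opt}}\boldsymbol{h}_k\boldsymbol{h}_k^H$, which satisfies $\boldsymbol{A}(\lambda^{\mathrm{opt}},\{\mu_k^{\mathrm{opt}}\})\succeq\boldsymbol{0}$, with eigenvalue decomposition $\boldsymbol{A}(\lambda^{\mathrm{opt}},\{\mu_k^{\mathrm{opt}}\}) = \boldsymbol{U}^{\mathrm{opt}}\boldsymbol{\Lambda}^{\mathrm{opt}}\boldsymbol{U}^{\mathrm{opt}H}$, where $\boldsymbol{U}^{\mathrm{opt}}$ is unitary and $\boldsymbol{\Lambda}^{\mathrm{opt}}=\mathrm{diag}(\alpha_1^{\mathrm{opt}},\dots,\alpha_{N_t}^{\mathrm{opt}})$ with $\alpha_1^{\mathrm{opt}}\ge\dots\ge\alpha_{N_t}^{\mathrm{opt}}$. Then $\mathrm{rank}(\boldsymbol{A}(\lambda^{\mathrm{opt}},\{\mu_k^{\mathrm{opt}}\}))=N_t$, so $\alpha_1^{\mathrm{opt}}\ge\dots\ge\alpha_{N_t}^{\mathrm{opt}}>0$, and the optimal solution of (P1.1) is $$\boldsymbol{S}_x^{\mathrm{opt}} = \boldsymbol{U}^{\mathrm{opt}}\,\mathr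m{diag}\big((\alpha_1^{\mathrm{opt}})^{-1/2},\dots,(\alpha_{N_t}^{\mathrm{opt}})^{-1/2}\big)\,\boldsymbol{U}^{\mathrm{opt}H}.$$
   Context: All matrices are complex; $(\cdot)^H$ denotes conjugate transpose, $\boldsymbol{S}\succeq\boldsymbol{0}$ means Hermitian positive semidefinite, $\boldsymbol{I}$ is the $N_t\times N_t$ identity. In the application, $\Gamma=\sigma^2(2^{\bar R}-1)$ for a noise power $\sigma^2>0$ and rate threshold $\bar R\ge 0$. *)

theory Defs
  imports "HOL-Analysis.Analysis"
begin

text \<open>Complex N_t x N_t matrices are rendered as complex^'n^'n (N_t = CARD('n)).\<close>

definition cadj :: "complex^'n^'m \<Rightarrow> complex^'m^'n" where
  "cadj A = (\<chi> i j. cnj (A $ j $ i))"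

definition hermitian :: "complex^'n^'n \<Rightarrow> bool" where
  "hermitian A \<longleftrightarrow> cadj A = A"

definition qform :: "complex^'n^'n \<Rightarrow> complex^'n \<Rightarrow> complex" where
  "qform A x = (\<Sum>i\<in>UNIV. cnj (x $ i) * (A *v x) $ i)"

definition psd :: "complex^'n^'n \<Rightarrow> bool" where
  "psd A \<longleftrightarrow> hermitian A \<and> (\<forall>x. 0 \<le> Re (qform A x))"

definition unitary :: "complex^'n^'n \<Rightarrow> bool" where
  "unitary U \<longleftrightarrow> cadj U ** U = mat 1 \<and> U ** cadj U = mat 1"

definition cdiag :: "('n \<Rightarrow> complex) \<Rightarrow> complex^'n^'n" where
  "cdiag d = (\<chi> i j. if i = j then d i else 0)"

definition outer :: "complex^'n \<Rightarrow> complex^'n^'n" where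
  "outer v = (\<chi> i j. v $ i * cnj (v $ j))"

definition obj :: "complex^'n^'n \<Rightarrow> ereal" where
  "obj S = (if invertible S then ereal (Re (trace (matrix_inv S))) else \<infinity>)"

definition feasible :: "(nat \<Rightarrow> complex^'n) \<Rightarrow> nat \<Rightarrow> real \<Rightarrow> real \<Rightarrow> complex^'n^'n \<Rightarrow> bool" where
  "feasible h K \<Gamma> P S \<longleftrightarrow> psd S \<and> (\<forall>k<K. \<Gamma> \<le> Re (qform S (h k))) \<and> Re (trace S) \<le> P"

definition strictly_feasible :: "(nat \<Rightarrow> complex^'n) \<Rightarrow> nat \<Rightarrow> real \<Rightarrow> real \<Rightarrow> bool" where
  "strictly_feasible h K \<Gamma> P \<longleftrightarrow> (\<exists>S::complex^'n^'n. psd S \<and> invertible S \<and>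
      (\<forall>k<K. \<Gamma> < Re (qform S (h k))) \<and> Re (trace S) < P)"

definition Amat :: "(nat \<Rightarrow> complex^'n) \<Rightarrow> nat \<Rightarrow> real \<Rightarrow> (nat \<Rightarrow> real) \<Rightarrow> complex^'n^'n" where
  "Amat h K lam mu = lam *\<^sub>R mat 1 - (\<Sum>k<K. mu k *\<^sub>R outer (h k))"

definition lagrangian :: "(nat \<Rightarrow> complex^'n) \<Rightarrow> nat \<Rightarrow> real \<Rightarrow> real \<Rightarrow>
    complex^'n^'n \<Rightarrow> real \<Rightarrow> (nat \<Rightarrow> real) \<Rightarrow> ereal" where
  "lagrangian h K \<Gamma> P S lam mu =
     obj S + ereal (\<Gamma> * (\<Sum>k<K. mu k)) + ereal (Re (trace (Amat h K lam mu ** S))) - ereal (lam * P)"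

definition dual_fun :: "(nat \<Rightarrow> complex^'n) \<Rightarrow> nat \<Rightarrow> real \<Rightarrow> real \<Rightarrow> real \<Rightarrow> (nat \<Rightarrow> real) \<Rightarrow> ereal" where
  "dual_fun h K \<Gamma> P lam mu = (INF S\<in>{S::complex^'n^'n. psd S}. lagrangian h K \<Gamma> P S lam mu)"

definition dual_optimal :: "(nat \<Rightarrow> complex^'n) \<Rightarrow> nat \<Rightarrow> real \<Rightarrow> real \<Rightarrow> real \<Rightarrow> (nat \<Rightarrow> real) \<Rightarrow> bool" where
  "dual_optimal h K \<Gamma> P lam mu \<longleftrightarrow> 0 \<le> lam \<and> (\<forall>k<K. 0 \<le> mu k) \<and>
     (\<forall>lam' mu'. 0 \<le> lam' \<and> (\<forall>k<K. 0 \<le> mu' k) \<longrightarrow> dual_fun h K \<Gamma> P lam' mu' \<le> dual_fun h K \<Gamma> P lam mu)"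

definition primal_optimal :: "(nat \<Rightarrow> complex^'n) \<Rightarrow> nat \<Rightarrow> real \<Rightarrow> real \<Rightarrow> complex^'n^'n \<Rightarrow> bool" where
  "primal_optimal h K \<Gamma> P S \<longleftrightarrow> feasible h K \<Gamma> P S \<and> (\<forall>S'. feasible h K \<Gamma> P S' \<longrightarrow> obj S \<le> obj S')"

end

theory Submission
  imports Defs
begin


lemma matrix_add_rdistrib': "((A::'a::semiring_1^'n^'m) + B) ** C = A ** C + B ** C"
  by (vector matrix_matrix_mult_def sum.distrib[symmetric] field_simps)

lemma matrix_sub_ldistrib': "(A::'a::ring_1^'n^'m) ** (B - C) = A ** B - A ** C"
  by (vector matrix_matrix_mult_def sum_subtractf[symmetric] field_simps)

lemma matrix_sub_rdistrib': "((A::'a::ring_1^'n^'m) - B) ** C = A ** C - B ** C"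
  by (vector matrix_matrix_mult_def sum_subtractf[symmetric] field_simps)

lemma scaleR_mm_left: "(k *\<^sub>R (A::complex^'n^'m)) ** B = k *\<^sub>R (A ** B)"
  by (simp add: scalar_matrix_assoc)

lemma scaleR_mm_right: "(A::complex^'n^'m) ** (k *\<^sub>R B) = k *\<^sub>R (A ** B)"
  by (simp add: matrix_scalar_ac scalar_matrix_assoc)

lemma trace_scaleR: "trace (k *\<^sub>R (A::complex^'n^'n)) = of_real k * trace A"
  unfolding trace_def vector_scaleR_component by (simp add: scaleR_conv_of_real sum_distrib_left)

lemma trace_sum: "trace (sum f S :: complex^'n^'n) = (\<Sum>k\<in>S. trace (f k))"
  unfolding trace_def by (simp, rule sum.swap)

lemma sum_mm_left: "(sum f S :: complex^'n^'m) ** B = (\<Sum>k\<in>S. f k ** B)"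
  by (induction S rule: infinite_finite_induct) (auto simp: matrix_add_rdistrib')

lemma trace_conj4: "trace ((U::complex^'n^'n) ** D ** V ** S) = trace (D ** (V ** S ** U))"
proof -
  have "trace (U ** D ** V ** S) = trace (U ** (D ** V ** S))" by (simp add: matrix_mul_assoc)
  also have "\<dots> = trace ((D ** V ** S) ** U)" by (rule trace_mul_sym)
  also have "\<dots> = trace (D ** (V ** S ** U))" by (simp add: matrix_mul_assoc)
  finally show ?thesis .
qed

lemma trace_conj3: "trace ((U::complex^'n^'n) ** D ** V) = trace (D ** (V ** U))"
proof -
  have "trace (U ** D ** V) = trace (U ** (D ** V))" by (simp add: matrix_mul_assoc)
  also have "\<dots> = trace ((D ** V) ** U)" by (rule trace_mul_sym)
  also have "\<dots> = trace (D ** (V ** U))" by (simp add: matrix_mul_assoc)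
  finally show ?thesis .
qed

lemma cadj_mult: "cadj ((A::complex^'n^'m) ** B) = cadj B ** cadj A"
  unfolding cadj_def matrix_matrix_mult_def vec_eq_iff by (simp add: mult.commute)

lemma cadj_cadj[simp]: "cadj (cadj A) = A"
  by (simp add: cadj_def vec_eq_iff)

lemma cadj_add: "cadj (A + B) = cadj A + cadj B"
  by (simp add: cadj_def vec_eq_iff)

lemma cadj_diff: "cadj (A - B) = cadj A - cadj B"
  by (simp add: cadj_def vec_eq_iff)

lemma cadj_scaleR: "cadj (k *\<^sub>R A) = k *\<^sub>R cadj A"
  unfolding cadj_def vec_eq_iff by simp

lemma cadj_mat1: "cadj (mat 1 :: complex^'n^'n) = mat 1"
  by (simp add: cadj_def mat_def vec_eq_iff)

lemma herm_add: "hermitian A \<Longrightarrow> hermitian B \<Longrightarrow> hermitian (A + B)"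
  by (simp add: hermitian_def cadj_add)
lemma herm_diff: "hermitian A \<Longrightarrow> hermitian B \<Longrightarrow> hermitian (A - B)"
  by (simp add: hermitian_def cadj_diff)
lemma herm_scaleR: "hermitian A \<Longrightarrow> hermitian (k *\<^sub>R A)"
  by (simp add: hermitian_def cadj_scaleR)
lemma herm_mat1: "hermitian (mat 1 :: complex^'n^'n)"
  by (simp add: hermitian_def cadj_mat1)
lemma herm_entry: assumes "hermitian A" shows "cnj (A $ j $ i) = A $ i $ j"
proof -
  have "cadj A $ i $ j = A $ i $ j" using assms by (simp add: hermitian_def)
  then show ?thesis by (simp add: cadj_def)
qed
lemma herm_outer: "hermitian (outer v)"
  unfolding hermitian_def cadj_def outer_def vec_eq_iff by (simp add: mult.commute)

lemma inv_unique:
  fixes A B :: "complex^'n^'n"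
  assumes "A ** B = mat 1"
  shows "invertible A" "matrix_inv A = B" "A ** matrix_inv A = mat 1" "matrix_inv A ** A = mat 1"
proof -
  show iA: "invertible A" using assms invertible_right_inverse by blast
  then have *: "A ** matrix_inv A = mat 1 \<and> matrix_inv A ** A = mat 1"
    unfolding invertible_def matrix_inv_def by (rule someI_ex)
  then show "A ** matrix_inv A = mat 1" "matrix_inv A ** A = mat 1" by auto
  have "matrix_inv A = matrix_inv A ** (A ** B)" using assms by simp
  also have "\<dots> = B" using * by (simp add: matrix_mul_assoc)
  finally show "matrix_inv A = B" .
qed

lemma inv_props:
  fixes A :: "complex^'n^'n"
  assumes "invertible A"
  shows "A ** matrix_inv A = mat 1" "matrix_inv A ** A = mat 1"
  using assms unfolding invertible_def matrix_inv_def by (metis (mono_tags, lifting) someI_ex)+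

lemma herm_inv:
  fixes S :: "complex^'n^'n"
  assumes "hermitian S" "invertible S"
  shows "hermitian (matrix_inv S)"
proof -
  have "S ** cadj (matrix_inv S) = mat 1"
    using inv_props[OF assms(2)] assms(1)
    by (metis cadj_mat1 cadj_mult hermitian_def)
  then have "matrix_inv S = cadj (matrix_inv S)" using inv_unique(2) by metis
  then show ?thesis by (simp add: hermitian_def)
qed


lemma qform_trace: "qform M x = trace (M ** outer x)"
  unfolding qform_def trace_def matrix_matrix_mult_def outer_def matrix_vector_mult_def
  by (simp add: sum_distrib_left mult_ac)

lemma trace_YSY:
  fixes Y S :: "complex^'n^'n"
  assumes "hermitian Y"
  shows "trace (Y ** S ** Y) = (\<Sum>i\<in>UNIV. qform S (column i Y))"
  unfolding trace_def
proof (rule sum.cong[OF refl])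
  fix i
  have "(Y ** S ** Y) $ i $ i = (\<Sum>k\<in>UNIV. (\<Sum>j\<in>UNIV. Y $ i $ j * S $ j $ k) * Y $ k $ i)"
    by (simp add: matrix_matrix_mult_def)
  also have "\<dots> = (\<Sum>j\<in>UNIV. Y $ i $ j * (\<Sum>k\<in>UNIV. S $ j $ k * Y $ k $ i))"
    unfolding sum_distrib_left sum_distrib_right by (subst sum.swap) (simp add: mult_ac)
  also have "\<dots> = qform S (column i Y)"
    unfolding qform_def matrix_vector_mult_def column_def using herm_entry[OF assms] by simp
  finally show "(Y ** S ** Y) $ i $ i = qform S (column i Y)" .
qed


definition ud :: "complex^'n^'n \<Rightarrow> ('n \<Rightarrow> real) \<Rightarrow> complex^'n^'n" where
  "ud U d = U ** cdiag (\<lambda>i. complex_of_real (d i)) ** cadj U"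

lemma cdiag_mult_left: "(cdiag d ** M) $ i $ j = d i * M $ i $ j"
proof -
  have "(cdiag d ** M) $ i $ j = (\<Sum>k\<in>UNIV. (if k = i then d i * M $ k $ j else 0))"
    unfolding matrix_matrix_mult_def cdiag_def vec_lambda_beta by (rule sum.cong) auto
  then show ?thesis by simp
qed
lemma cdiag_mult_right: "(M ** cdiag d) $ i $ j = M $ i $ j * d j"
proof -
  have "(M ** cdiag d) $ i $ j = (\<Sum>k\<in>UNIV. (if k = j then M $ i $ j * d j else 0))"
    unfolding matrix_matrix_mult_def cdiag_def vec_lambda_beta by (rule sum.cong) auto
  then show ?thesis by simp
qed
lemma cdiag_mult: "cdiag d ** cdiag e = cdiag (\<lambda>i. d i * e i)"
  unfolding vec_eq_iff cdiag_mult_left by (simp add: cdiag_def)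

lemma cdiag_one: "cdiag (\<lambda>_. 1) = mat 1"
  by (simp add: cdiag_def mat_def)

lemma cdiag_add_const: "cdiag (\<lambda>i. d i + complex_of_real c) = cdiag d + c *\<^sub>R mat 1"
  by (simp add: cdiag_def mat_def vec_eq_iff of_real_def)

lemma cadj_cdiag_real: "cadj (cdiag (\<lambda>i. complex_of_real (d i))) = cdiag (\<lambda>i. complex_of_real (d i))"
  by (simp add: cadj_def cdiag_def vec_eq_iff)

lemma Ediag0: "(cadj U ** E ** U) $ i $ i = qform E (column i U)"
proof -
  have "(cadj U ** E ** U) $ i $ i = (\<Sum>k\<in>UNIV. (\<Sum>j\<in>UNIV. cnj (U $ j $ i) * E $ j $ k) * U $ k $ i)"
    by (simp add: matrix_matrix_mult_def cadj_def)
  also have "\<dots> = (\<Sum>j\<in>UNIV. cnj (U $ j $ i) * (\<Sum>k\<in>UNIV. E $ j $ k * U $ k $ i))"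
    unfolding sum_distrib_left sum_distrib_right by (subst sum.swap) (simp add: mult_ac)
  also have "\<dots> = qform E (column i U)"
    by (simp add: qform_def matrix_vector_mult_def column_def)
  finally show ?thesis .
qed

lemma trace_cdiag_mult: "trace (cdiag d ** M) = (\<Sum>i\<in>UNIV. d i * M $ i $ i)"
  unfolding trace_def cdiag_mult_left ..

context
  fixes U :: "complex^'n^'n"
  assumes U: "unitary U"
begin

lemma UU: "cadj U ** U = mat 1" "U ** cadj U = mat 1"
  using U by (auto simp: unitary_def)

lemma ud_mult: "ud U d ** ud U e = ud U (\<lambda>i. d i * e i)"
proof -
  have "ud U d ** ud U e = U ** cdiag (\<lambda>i. complex_of_real (d i)) ** (cadj U ** U) **
       cdiag (\<lambda>i. complex_of_real (e i)) ** cadj U"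
    by (simp add: ud_def matrix_mul_assoc)
  also have "\<dots> = ud U (\<lambda>i. d i * e i)"
    by (simp add: UU ud_def cdiag_mult matrix_mul_assoc[symmetric])
  finally show ?thesis .
qed

lemma ud_one: "ud U (\<lambda>_. 1) = mat 1"
  by (simp add: ud_def cdiag_one UU)

lemma ud_add_const: "ud U (\<lambda>i. d i + c) = ud U d + c *\<^sub>R mat 1"
proof -
  have "ud U (\<lambda>i. d i + c) = U ** (cdiag (\<lambda>i. complex_of_real (d i)) + c *\<^sub>R mat 1) ** cadj U"
    unfolding ud_def by (simp add: cdiag_add_const[symmetric])
  also have "\<dots> = ud U d + c *\<^sub>R mat 1"
    by (simp add: ud_def matrix_add_ldistrib matrix_add_rdistrib' scaleR_mm_left scaleR_mm_right UU)
  finally show ?thesis .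
qed

lemma herm_ud: "hermitian (ud U d)"
  by (simp add: hermitian_def ud_def cadj_mult cadj_cdiag_real matrix_mul_assoc)

lemma trace_ud_mult: "trace (ud U d ** S) = (\<Sum>i\<in>UNIV. complex_of_real (d i) * qform S (column i U))"
proof -
  have "trace (ud U d ** S) = trace (cdiag (\<lambda>i. complex_of_real (d i)) ** (cadj U ** S ** U))"
    unfolding ud_def by (rule trace_conj4)
  also have "\<dots> = (\<Sum>i\<in>UNIV. complex_of_real (d i) * qform S (column i U))"
    by (simp add: trace_cdiag_mult Ediag0)
  finally show ?thesis .
qed

lemma trace_U: "trace S = (\<Sum>i\<in>UNIV. qform S (column i U))"
  using trace_ud_mult[of "\<lambda>_. 1" S] by (simp add: ud_one)

lemma trace_ud: "trace (ud U d) = (\<Sum>i\<in>UNIV. complex_of_real (d i))"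
proof -
  have "trace (ud U d) = trace (cdiag (\<lambda>i. complex_of_real (d i)) ** (cadj U ** U))"
    unfolding ud_def by (rule trace_conj3)
  then show ?thesis by (simp add: UU trace_def cdiag_def)
qed

end

lemma qform_outer: "0 \<le> Re (qform (outer x) v)"
proof -
  let ?z = "\<Sum>j\<in>UNIV. cnj (v $ j) * x $ j"
  have "qform (outer x) v = ?z * cnj ?z"
    unfolding qform_def outer_def matrix_vector_mult_def
    by (simp add: sum_distrib_left sum_distrib_right mult_ac)
  moreover have w: "\<And>w::complex. 0 \<le> Re (w * cnj w)" by (simp add: complex_mult_cnj)
  ultimately show ?thesis by (simp only:)
qed


context
  fixes U :: "complex^'n^'n"
  assumes U: "unitary U"
begin

lemma Re_trace_ud_mult: "Re (trace (ud U d ** S)) = (\<Sum>i\<in>UNIV. d i * Re (qform S (column i U)))"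
  by (simp add: trace_ud_mult[OF U] Re_sum)

lemma Re_trace_U: "Re (trace S) = (\<Sum>i\<in>UNIV. Re (qform S (column i U)))"
  by (simp add: trace_U[OF U, of S] Re_sum)

lemma psd_ud: assumes "\<And>i. 0 \<le> d i" shows "psd (ud U d)"
proof -
  have "0 \<le> Re (qform (ud U d) x)" for x
    by (subst qform_trace, subst Re_trace_ud_mult)
       (rule sum_nonneg, simp add: assms qform_outer)
  then show ?thesis by (simp add: psd_def herm_ud[OF U])
qed

lemma ud_inv: assumes "\<And>i. d i \<noteq> 0"
  shows "invertible (ud U d)" "matrix_inv (ud U d) = ud U (\<lambda>i. 1 / d i)"
proof -
  have "ud U d ** ud U (\<lambda>i. 1 / d i) = mat 1"
    using assms by (simp add: ud_mult[OF U] ud_one[OF U])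
  then show "invertible (ud U d)" "matrix_inv (ud U d) = ud U (\<lambda>i. 1 / d i)"
    using inv_unique by blast+
qed

lemma obj_ud: assumes "\<And>i. 0 < d i"
  shows "obj (ud U d) = ereal (\<Sum>i\<in>UNIV. 1 / d i)"
proof -
  have "\<And>i. d i \<noteq> 0" using assms by (metis less_irrefl)
  then show ?thesis
    by (simp add: obj_def ud_inv trace_ud[OF U] Re_sum)
qed

end

lemma qform_expand: "qform S x = (\<Sum>a\<in>UNIV. \<Sum>b\<in>UNIV. cnj (x $ a) * S $ a $ b * x $ b)"
  by (simp add: qform_def matrix_vector_mult_def sum_distrib_left mult_ac)

lemma psd_diag:
  assumes "psd S"
  shows "0 \<le> Re (S $ i $ i)" "Im (S $ i $ i) = 0"
proof -
  have cb: "S *v axis i 1 = column i S"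
  proof -
    have "(S *v axis i 1) $ a = S $ a $ i" for a
    proof -
      have "(S *v axis i 1) $ a = (\<Sum>b\<in>UNIV. if b = i then S $ a $ i else 0)"
        unfolding matrix_vector_mult_def vec_lambda_beta by (rule sum.cong) (auto simp: axis_def)
      then show ?thesis by simp
    qed
    then show ?thesis by (simp add: vec_eq_iff column_def)
  qed
  have "qform S (axis i 1) = (\<Sum>a\<in>UNIV. cnj (axis i 1 $ a) * S $ a $ i)"
    unfolding qform_def cb column_def by simp
  also have "\<dots> = (\<Sum>a\<in>UNIV. if a = i then S $ i $ i else 0)"
    by (rule sum.cong) (auto simp: axis_def)
  finally have "qform S (axis i 1) = (\<Sum>a\<in>UNIV. if a = i then S $ i $ i else 0)" .
  then have "qform S (axis i 1) = S $ i $ i" by simp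
  then show "0 \<le> Re (S $ i $ i)" using assms by (metis psd_def)
  have "cnj (S $ i $ i) = S $ i $ i" using assms by (simp add: psd_def herm_entry)
  then show "Im (S $ i $ i) = 0" by (metis cnj.simps(2) neg_equal_zero)
qed

lemma psd_trace_nonneg: "psd S \<Longrightarrow> 0 \<le> Re (trace S)"
  by (simp add: trace_def Re_sum sum_nonneg psd_diag)

lemma sum_two:
  fixes f :: "'n::finite \<Rightarrow> 'b::comm_monoid_add"
  assumes "i \<noteq> j" "\<And>a. a \<notin> {i,j} \<Longrightarrow> f a = 0"
  shows "(\<Sum>a\<in>UNIV. f a) = f i + f j"
proof -
  have "(\<Sum>a\<in>UNIV. f a) = (\<Sum>a\<in>{i,j}. f a)"
    by (rule sum.mono_neutral_right) (auto simp: assms(2))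
  then show ?thesis using assms(1) by simp
qed

lemma psd_offdiag:
  fixes S :: "complex^'n^'n"
  assumes "psd S" "i \<noteq> j"
  shows "2 * cmod (S $ i $ j) \<le> Re (S $ i $ i) + Re (S $ j $ j)"
proof (cases "S $ i $ j = 0")
  case True then show ?thesis using psd_diag[OF assms(1)] by (simp add: add_nonneg_nonneg)
next
  case False
  define z where "z = - cnj (S $ i $ j) / complex_of_real (cmod (S $ i $ j))"
  define x :: "complex^'n" where "x = (\<chi> b. if b = i then 1 else if b = j then z else 0)"
  have xi: "x $ i = 1" "x $ j = z" "\<And>b. b \<notin> {i,j} \<Longrightarrow> x $ b = 0"
    using assms(2) by (auto simp: x_def)
  have hij: "S $ j $ i = cnj (S $ i $ j)" using assms(1) by (simp add: psd_def herm_entry)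
  have inner: "(S *v x) $ a = S $ a $ i + S $ a $ j * z" for a
  proof -
    have "(S *v x) $ a = (\<Sum>b\<in>UNIV. S $ a $ b * x $ b)" by (simp add: matrix_vector_mult_def)
    also have "\<dots> = S $ a $ i * x $ i + S $ a $ j * x $ j"
      by (rule sum_two[OF assms(2)]) (simp add: xi)
    finally show ?thesis by (simp add: xi)
  qed
  have "qform S x = cnj (x $ i) * (S *v x) $ i + cnj (x $ j) * (S *v x) $ j"
    unfolding qform_def by (rule sum_two[OF assms(2)]) (simp add: xi)
  also have "\<dots> = S $ i $ i + S $ i $ j * z + cnj z * S $ j $ i + cnj z * z * S $ j $ j"
    by (simp add: xi inner algebra_simps)
  also have wz: "S $ i $ j * z = - complex_of_real (cmod (S $ i $ j))"
  proof -
    have m: "cmod (S $ i $ j) \<noteq> 0" using False by simp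
    have "S $ i $ j * cnj (S $ i $ j) = complex_of_real ((cmod (S $ i $ j))^2)"
      by (rule complex_norm_square[symmetric])
    then show ?thesis using m by (simp add: z_def power2_eq_square field_simps)
  qed
  also have "cnj z * S $ j $ i = - complex_of_real (cmod (S $ i $ j))"
  proof -
    have "cnj z * S $ j $ i = cnj (S $ i $ j * z)" by (simp add: hij)
    then show ?thesis by (simp add: wz)
  qed
  also have "cnj z * z = 1"
  proof -
    have m: "cmod (S $ i $ j) \<noteq> 0" using False by simp
    have "cnj (S $ i $ j) * S $ i $ j = complex_of_real ((cmod (S $ i $ j))^2)"
      by (subst mult.commute) (rule complex_norm_square[symmetric])
    then show ?thesis using m by (simp add: z_def power2_eq_square field_simps)
  qed
  finally have "Re (qform S x) = Re (S $ i $ i) - 2 * cmod (S $ i $ j) + Re (S $ j $ j)" by simp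
  moreover have "0 \<le> Re (qform S x)" using assms(1) by (simp add: psd_def)
  ultimately show ?thesis by linarith
qed

lemma psd_entry:
  assumes "psd S"
  shows "cmod (S $ i $ j) \<le> Re (trace S)"
proof (cases "i = j")
  case True
  have "cmod (S $ i $ i) = Re (S $ i $ i)"
    using psd_diag[OF assms, of i] by (simp add: cmod_def)
  also have "\<dots> \<le> Re (trace S)"
    unfolding trace_def Re_sum
    by (rule member_le_sum) (auto simp: psd_diag[OF assms])
  finally show ?thesis using True by simp
next
  case False
  have "Re (S $ i $ i) + Re (S $ j $ j) = (\<Sum>k\<in>{i,j}. Re (S $ k $ k))" using False by simp
  also have "\<dots> \<le> Re (trace S)"
    unfolding trace_def Re_sum
    by (rule sum_mono2) (auto simp: psd_diag[OF assms])
  finally show ?thesis using psd_offdiag[OF assms False] psd_diag[OF assms, of i] psd_diag[OF assms, of j]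
    by linarith
qed

lemma trace_bound:
  assumes "psd S"
  shows "\<bar>Re (trace (F ** S))\<bar> \<le> (\<Sum>i\<in>UNIV. \<Sum>k\<in>UNIV. cmod (F $ i $ k)) * Re (trace S)"
proof -
  have "\<bar>Re (trace (F ** S))\<bar> \<le> cmod (trace (F ** S))" by (rule abs_Re_le_cmod)
  also have "\<dots> \<le> (\<Sum>i\<in>UNIV. \<Sum>k\<in>UNIV. cmod (F $ i $ k) * cmod (S $ k $ i))"
    unfolding trace_def matrix_matrix_mult_def
    by (simp, rule order_trans[OF norm_sum sum_mono], rule order_trans[OF norm_sum sum_mono],
        simp add: norm_mult)
  also have "\<dots> \<le> (\<Sum>i\<in>UNIV. \<Sum>k\<in>UNIV. cmod (F $ i $ k) * Re (trace S))"
    by (intro sum_mono mult_left_mono psd_entry[OF assms]) auto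
  also have "\<dots> = (\<Sum>i\<in>UNIV. \<Sum>k\<in>UNIV. cmod (F $ i $ k)) * Re (trace S)"
    by (simp add: sum_distrib_right)
  finally show ?thesis .
qed


lemma GI:
  fixes S N B :: "complex^'n^'n"
  assumes S: "psd S" "invertible S" and N: "hermitian N"
  shows "2 * Re (trace N) + Re (trace ((B - N ** N) ** S))
         \<le> Re (trace (matrix_inv S)) + Re (trace (B ** S))"
proof -
  define Si where "Si = matrix_inv S"
  have SSi: "S ** Si = mat 1" "Si ** S = mat 1" using inv_props[OF S(2)] by (auto simp: Si_def)
  have hSi: "hermitian Si" using herm_inv S by (auto simp: Si_def psd_def)
  define Y where "Y = Si - N"
  have hY: "hermitian Y" using herm_diff[OF hSi N] by (simp add: Y_def)
  have "Y ** S ** Y = (mat 1 - N ** S) ** (Si - N)"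
    by (simp add: Y_def matrix_sub_rdistrib' SSi)
  also have "\<dots> = Si - N - (N ** (S ** Si) - N ** S ** N)"
    by (simp add: matrix_sub_ldistrib' matrix_sub_rdistrib' matrix_mul_assoc)
  also have "\<dots> = Si - N - N + N ** S ** N"
    by (simp add: SSi)
  finally have eq: "Y ** S ** Y = Si - N - N + N ** S ** N" .
  have t: "trace (N ** S ** N) = trace ((N ** N) ** S)"
    by (subst trace_mul_sym) (simp add: matrix_mul_assoc)
  have "0 \<le> Re (trace (Y ** S ** Y))"
    unfolding trace_YSY[OF hY] Re_sum
    by (rule sum_nonneg) (use S(1) in \<open>simp add: psd_def\<close>)
  then have "0 \<le> Re (trace Si) - 2 * Re (trace N) + Re (trace ((N ** N) ** S))"
    unfolding eq trace_add trace_sub t by simp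
  moreover have "Re (trace ((B - N ** N) ** S)) = Re (trace (B ** S)) - Re (trace ((N ** N) ** S))"
    by (simp add: matrix_sub_rdistrib' trace_sub)
  ultimately show ?thesis by (simp add: Si_def)
qed


lemma psd_qform_nonneg: "psd S \<Longrightarrow> 0 \<le> Re (qform S v)"
  by (simp add: psd_def)

context
  fixes U :: "complex^'n^'n"
  assumes U: "unitary U"
begin

lemma LB:
  assumes b: "\<And>i. 0 \<le> \<beta> i" and S: "psd S"
  shows "ereal (2 * (\<Sum>i\<in>UNIV. sqrt (\<beta> i))) \<le> obj S + ereal (Re (trace (ud U \<beta> ** S)))"
proof (cases "invertible S")
  case False then show ?thesis by (simp add: obj_def)
next
  case True
  define N where "N = ud U (\<lambda>i. sqrt (\<beta> i))"
  have NN: "N ** N = ud U \<beta>" using b by (simp add: N_def ud_mult[OF U])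
  have "2 * Re (trace N) + Re (trace ((ud U \<beta> - N ** N) ** S))
         \<le> Re (trace (matrix_inv S)) + Re (trace (ud U \<beta> ** S))"
    by (rule GI[OF S True]) (simp add: N_def herm_ud[OF U])
  then show ?thesis using True unfolding NN
    by (simp add: obj_def N_def trace_ud[OF U] Re_sum trace_0[simplified])
qed

lemma Ediag: "(cadj U ** E ** U) $ i $ i = qform E (column i U)"
  by (rule Ediag0)

end


context
  fixes U :: "complex^'n^'n" and a :: "'n \<Rightarrow> real" and E :: "complex^'n^'n"
  assumes U: "unitary U" and apos: "\<And>i. 0 < a i" and hE: "hermitian E"
begin

definition "E' = cadj U ** E ** U"
definition "F' = (\<chi> i j. E' $ i $ j / complex_of_real (a i + a j))"
definition "F = U ** F' ** cadj U"
definition "R = ud U a"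

lemma hE': "hermitian E'"
  using hE by (simp add: E'_def hermitian_def cadj_mult matrix_mul_assoc)

lemma hF: "hermitian F"
proof -
  have "cadj F' = F'"
    using herm_entry[OF hE'] by (simp add: cadj_def F'_def vec_eq_iff add.commute)
  then show ?thesis by (simp add: hermitian_def F_def cadj_mult matrix_mul_assoc)
qed

lemma RF: "R ** F + F ** R = E"
proof -
  let ?D = "cdiag (\<lambda>i. complex_of_real (a i))"
  have UU: "cadj U ** U = mat 1" "U ** cadj U = mat 1" using U by (auto simp: unitary_def)
  have 1: "R ** F = U ** (?D ** F') ** cadj U"
  proof -
    have "R ** F = U ** ?D ** (cadj U ** U) ** F' ** cadj U"
      by (simp add: R_def F_def ud_def matrix_mul_assoc)
    then show ?thesis by (simp add: UU matrix_mul_assoc)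
  qed
  have 2: "F ** R = U ** (F' ** ?D) ** cadj U"
  proof -
    have "F ** R = U ** F' ** (cadj U ** U) ** ?D ** cadj U"
      by (simp add: R_def F_def ud_def matrix_mul_assoc)
    then show ?thesis by (simp add: UU matrix_mul_assoc)
  qed
  have 3: "?D ** F' + F' ** ?D = E'"
  proof -
    have "(?D ** F' + F' ** ?D) $ i $ j = E' $ i $ j" for i j
    proof -
      have "(?D ** F' + F' ** ?D) $ i $ j = complex_of_real (a i) * F' $ i $ j + F' $ i $ j * complex_of_real (a j)"
        by (simp add: cdiag_mult_left cdiag_mult_right)
      also have "\<dots> = complex_of_real (a i + a j) * F' $ i $ j" by (simp add: algebra_simps)
      also have "\<dots> = E' $ i $ j"
      proof -
        have "a i + a j \<noteq> 0" using apos[of i] apos[of j] by linarith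
        then have nz: "complex_of_real (a i + a j) \<noteq> 0" by (metis of_real_eq_0_iff)
        show ?thesis unfolding F'_def vec_lambda_beta using nz by (simp del: of_real_add)
      qed
      finally show ?thesis .
    qed
    then show ?thesis by (simp add: vec_eq_iff)
  qed
  have "R ** F + F ** R = U ** (?D ** F' + F' ** ?D) ** cadj U"
    by (simp add: 1 2 matrix_add_ldistrib matrix_add_rdistrib')
  also have "\<dots> = (U ** cadj U) ** E ** (U ** cadj U)"
    by (simp add: 3 E'_def matrix_mul_assoc)
  finally show ?thesis by (simp add: UU)
qed

lemma trF: "2 * Re (trace F) = Re (trace (E ** ud U (\<lambda>i. 1 / a i)))"
proof -
  have UU: "cadj U ** U = mat 1" using U by (auto simp: unitary_def)
  have "trace F = trace (F' ** (cadj U ** U))"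
    unfolding F_def by (rule trace_conj3)
  also have "\<dots> = (\<Sum>i\<in>UNIV. E' $ i $ i / complex_of_real (2 * a i))"
    by (simp add: UU trace_def F'_def)
  finally have "2 * Re (trace F) = (\<Sum>i\<in>UNIV. Re (qform E (column i U)) / a i)"
    by (simp add: Re_sum sum_distrib_left E'_def Ediag[OF U] Re_divide_of_real)
  also have "\<dots> = Re (trace (E ** ud U (\<lambda>i. 1 / a i)))"
    by (subst trace_mul_sym) (simp add: Re_trace_ud_mult[OF U])
  finally show ?thesis .
qed

lemma RR: "R ** R = ud U (\<lambda>i. (a i)^2)"
  by (simp add: R_def ud_mult[OF U] power2_eq_square)

lemma NN_expand:
  fixes t s :: real
  shows "(R + t *\<^sub>R F - s *\<^sub>R mat 1) ** (R + t *\<^sub>R F - s *\<^sub>R mat 1)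
       = R ** R + t *\<^sub>R E + (t*t) *\<^sub>R (F ** F) - (2* s) *\<^sub>R R - (2* s*t) *\<^sub>R F + (s* s) *\<^sub>R mat 1"
proof -
  let ?N = "R + t *\<^sub>R F - s *\<^sub>R mat 1"
  have 1: "?N ** ?N = ?N ** R + t *\<^sub>R (?N ** F) - s *\<^sub>R ?N"
    by (simp only: matrix_add_ldistrib matrix_sub_ldistrib' scaleR_mm_right matrix_mul_rid)
  have 2: "?N ** R = R ** R + t *\<^sub>R (F ** R) - s *\<^sub>R R"
    by (simp only: matrix_add_rdistrib' matrix_sub_rdistrib' scaleR_mm_left matrix_mul_lid)
  have 3: "?N ** F = R ** F + t *\<^sub>R (F ** F) - s *\<^sub>R F"
    by (simp only: matrix_add_rdistrib' matrix_sub_rdistrib' scaleR_mm_left matrix_mul_lid)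
  have fr: "F ** R = E - R ** F" using RF by (simp add: algebra_simps)
  show ?thesis
    unfolding 1 2 3 fr vec_eq_iff by (simp add: scaleR_conv_of_real algebra_simps)
qed

lemma PL:
  "\<exists>C t0. 0 < t0 \<and> (\<forall>t S. \<bar>t\<bar> < t0 \<longrightarrow> psd S \<longrightarrow>
     ereal (2 * (\<Sum>i\<in>UNIV. a i) + t * Re (trace (E ** ud U (\<lambda>i. 1 / a i))) - C * t^2)
       \<le> obj S + ereal (Re (trace ((ud U (\<lambda>i. (a i)^2) + t *\<^sub>R E) ** S))))"
proof -
  define amin where "amin = Min (range a)"
  have amin_pos: "0 < amin" unfolding amin_def using apos by (simp add: finite_imageI)
  have amin_le: "amin \<le> a i" for i unfolding amin_def by simp
  define c1 where "c1 = (\<Sum>i\<in>UNIV. \<Sum>k\<in>UNIV. cmod ((F ** F) $ i $ k))"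
  define c2 where "c2 = (\<Sum>i\<in>UNIV. \<Sum>k\<in>UNIV. cmod (F $ i $ k))"
  have c1: "0 \<le> c1" "c2 \<ge> 0" unfolding c1_def c2_def by (auto intro!: sum_nonneg)
  define K where "K = (c1 + 1) / amin"
  have K: "0 < K" "K * amin = c1 + 1" using amin_pos c1 by (auto simp: K_def)
  define t0 where "t0 = 1 / (2 * K * c2 + K^2 + 1)"
  have D: "1 \<le> 2 * K * c2 + K^2 + 1" using K c1 by simp
  have t0: "0 < t0" "t0 \<le> 1" "t0 * (2 * K * c2 + K^2) \<le> 1"
  proof -
    show "0 < t0" using D by (simp add: t0_def)
    show "t0 \<le> 1" using D by (simp add: t0_def)
    have "t0 * (2 * K * c2 + K^2) = (2 * K * c2 + K^2) / (2 * K * c2 + K^2 + 1)"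
      by (simp add: t0_def)
    also have "\<dots> \<le> 1" using D by (simp add: divide_le_eq_1)
    finally show "t0 * (2 * K * c2 + K^2) \<le> 1" .
  qed
  define n where "n = real CARD('n)"
  show ?thesis
  proof (intro exI conjI allI impI)
    show "0 < t0" by (rule t0)
    fix t :: real and S :: "complex^'n^'n"
    assume tt: "\<bar>t\<bar> < t0" and S: "psd S"
    show "ereal (2 * (\<Sum>i\<in>UNIV. a i) + t * Re (trace (E ** ud U (\<lambda>i. 1 / a i))) - (2 * K * n) * t^2)
       \<le> obj S + ereal (Re (trace ((ud U (\<lambda>i. (a i)^2) + t *\<^sub>R E) ** S)))"
    proof (cases "invertible S")
      case False then show ?thesis by (simp add: obj_def)
    next
      case True
      define s where "s = K * t^2"
      define N where "N = R + t *\<^sub>R F - s *\<^sub>R mat 1"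
      have hN: "hermitian N"
        unfolding N_def R_def by (intro herm_diff herm_add herm_scaleR herm_ud[OF U] hF herm_mat1)
      define B where "B = ud U (\<lambda>i. (a i)^2) + t *\<^sub>R E"
      have BNN: "B - N ** N = (2* s) *\<^sub>R R + (2* s*t) *\<^sub>R F - (t*t) *\<^sub>R (F ** F) - (s* s) *\<^sub>R mat 1"
        unfolding N_def NN_expand B_def RR[symmetric] vec_eq_iff by (simp add: scaleR_conv_of_real algebra_simps)
      define T where "T = Re (trace S)"
      have T: "0 \<le> T" unfolding T_def by (rule psd_trace_nonneg[OF S])
      have trR: "amin * T \<le> Re (trace (R ** S))"
      proof -
        have "amin * T = (\<Sum>i\<in>UNIV. amin * Re (qform S (column i U)))"
          unfolding T_def Re_trace_U[OF U] by (simp add: sum_distrib_left)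
        also have "\<dots> \<le> (\<Sum>i\<in>UNIV. a i * Re (qform S (column i U)))"
          by (intro sum_mono mult_right_mono amin_le psd_qform_nonneg[OF S])
        finally show ?thesis by (simp add: R_def Re_trace_ud_mult[OF U])
      qed
      have bF: "\<bar>Re (trace (F ** S))\<bar> \<le> c2 * T"
        unfolding c2_def T_def by (rule trace_bound[OF S])
      have bFF: "\<bar>Re (trace ((F ** F) ** S))\<bar> \<le> c1 * T"
        unfolding c1_def T_def by (rule trace_bound[OF S])
      have Q: "Re (trace ((B - N ** N) ** S)) =
          2* s * Re (trace (R ** S)) + 2* s*t * Re (trace (F ** S)) - t*t * Re (trace ((F ** F) ** S)) - s* s*T"
        unfolding BNN T_def
        by (simp add: matrix_add_rdistrib' matrix_sub_rdistrib' scaleR_mm_left trace_add trace_sub trace_scaleR)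
      have s0: "0 \<le> s" unfolding s_def using K by simp
      have b1: "2* s*amin*T \<le> 2* s * Re (trace (R ** S))"
        using mult_left_mono[OF trR, of "2* s"] s0 by (simp add: mult_ac)
      have b2: "- (2* s*\<bar>t\<bar>*c2*T) \<le> 2* s*t * Re (trace (F ** S))"
      proof -
        have "\<bar>2* s*t * Re (trace (F ** S))\<bar> \<le> 2* s*\<bar>t\<bar> * (c2*T)"
          using mult_left_mono[OF bF, of "2* s*\<bar>t\<bar>"] s0 by (simp add: abs_mult)
        then show ?thesis by (simp add: mult_ac)
      qed
      have b3: "t*t * Re (trace ((F ** F) ** S)) \<le> t*t*c1*T"
      proof -
        have "t*t * Re (trace ((F ** F) ** S)) \<le> t*t * \<bar>Re (trace ((F ** F) ** S))\<bar>"
          by (intro mult_left_mono) auto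
        also have "\<dots> \<le> t*t*(c1*T)" by (intro mult_left_mono bFF) auto
        finally show ?thesis by (simp add: mult_ac)
      qed
      have key: "2*K*\<bar>t\<bar>*c2 + K^2*t^2 \<le> 1"
      proof -
        have at1: "\<bar>t\<bar> \<le> 1" using tt t0 by linarith
        have "t^2 = \<bar>t\<bar> * \<bar>t\<bar>" by (simp add: power2_eq_square)
        also have "\<dots> \<le> \<bar>t\<bar> * 1" by (rule mult_left_mono[OF at1]) simp
        finally have "t^2 \<le> \<bar>t\<bar>" by simp
        then have "K^2*t^2 \<le> K^2*\<bar>t\<bar>" by (simp add: mult_left_mono)
        moreover have "(2*K*c2 + K^2) * \<bar>t\<bar> \<le> (2*K*c2 + K^2) * t0"
          using tt K c1 by (intro mult_left_mono) auto
        moreover have "(2*K*c2 + K^2) * \<bar>t\<bar> = 2*K*\<bar>t\<bar>*c2 + K^2*\<bar>t\<bar>"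
          by (simp add: algebra_simps)
        moreover have "(2*K*c2 + K^2) * t0 = t0 * (2 * K * c2 + K^2)" by (simp add: mult.commute)
        ultimately show ?thesis using t0(3) by linarith
      qed
      have "0 \<le> t^2 * T * (c1 + 2 - 2*K*\<bar>t\<bar>*c2 - K^2*t^2)"
        using key T c1 by (intro mult_nonneg_nonneg) auto
      also have "t^2 * T * (c1 + 2 - 2*K*\<bar>t\<bar>*c2 - K^2*t^2) = 2*T*t^2*(c1+1) - 2* s*\<bar>t\<bar>*c2*T - t*t*c1*T - s* s*T"
        unfolding s_def by (simp add: algebra_simps power2_eq_square)
      also have "2*T*t^2*(c1+1) = 2* s*amin*T"
      proof -
        have "2* s*amin*T = 2*T*t^2*(K*amin)" by (simp add: s_def mult_ac)
        then show ?thesis by (simp add: K(2)) (metis mult.commute)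
      qed
      finally have Qnn: "0 \<le> Re (trace ((B - N ** N) ** S))"
        unfolding Q using b1 b2 b3 by linarith
      have "2 * Re (trace N) + Re (trace ((B - N ** N) ** S))
         \<le> Re (trace (matrix_inv S)) + Re (trace (B ** S))"
        by (rule GI[OF S True hN])
      moreover have "2 * Re (trace N) = 2 * (\<Sum>i\<in>UNIV. a i) + t * Re (trace (E ** ud U (\<lambda>i. 1 / a i))) - (2 * K * n) * t^2"
        unfolding N_def trF[symmetric]
        by (simp add: trace_add trace_sub trace_scaleR trace_I R_def trace_ud[OF U] Re_sum s_def n_def algebra_simps)
      ultimately show ?thesis using Qnn True by (simp add: obj_def B_def)
    qed
  qed
qed


end


lemma rank_inv:
  fixes A :: "complex^'n^'n"
  assumes "invertible A"
  shows "rank A = CARD('n)"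
proof -
  have "\<exists>B. B ** A = mat 1" using assms invertible_left_inverse by blast
  then have sp: "vec.span (rows A) = UNIV" using matrix_left_invertible_span_rows_gen by blast
  have "rank A = vec.dim (rows A)" by (simp add: row_rank_def_gen)
  also have "\<dots> = vec.dim (vec.span (rows A))" by (simp add: vec.dim_span)
  also have "\<dots> = vec.dim (UNIV :: (complex^'n) set)" by (simp add: sp)
  also have "\<dots> = CARD('n)" by (rule vec_dim_card)
  finally show ?thesis .
qed

lemma obj_cases: "obj S = \<infinity> \<or> obj S = ereal (Re (trace (matrix_inv S)))"
  by (simp add: obj_def)

lemma lagr: "lagrangian h K \<Gamma> P S lam mu =
   obj S + ereal (\<Gamma> * (\<Sum>k<K. mu k) + Re (trace (Amat h K lam mu ** S)) - lam * P)"
  using obj_cases[of S] by (auto simp: lagrangian_def)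

lemma ereal_shift: "ereal X \<le> obj S + ereal Y \<Longrightarrow> ereal (X + c) \<le> obj S + ereal (Y + c)"
  using obj_cases[of S] by auto

lemma Amat_lam: "Amat h K (lam + d) mu = Amat h K lam mu + d *\<^sub>R mat 1"
  by (simp add: Amat_def scaleR_add_left algebra_simps)

lemma sum_upd:
  fixes f :: "nat \<Rightarrow> 'a::real_vector"
  assumes "k < K"
  shows "(\<Sum>i<K. (mu(k := mu k + t)) i *\<^sub>R f i) = (\<Sum>i<K. mu i *\<^sub>R f i) + t *\<^sub>R f k"
proof -
  have "(\<Sum>i<K. (mu(k := mu k + t)) i *\<^sub>R f i) = (\<Sum>i<K. mu i *\<^sub>R f i + (if i = k then t *\<^sub>R f i else 0))"
    by (rule sum.cong) (auto simp: scaleR_add_left)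
  also have "\<dots> = (\<Sum>i<K. mu i *\<^sub>R f i) + t *\<^sub>R f k"
    using assms by (simp add: sum.distrib)
  finally show ?thesis .
qed

lemma sum_upd_real:
  fixes mu :: "nat \<Rightarrow> real"
  assumes "k < K"
  shows "(\<Sum>i<K. (mu(k := mu k + t)) i) = (\<Sum>i<K. mu i) + t"
  using sum_upd[OF assms, where f="\<lambda>_. 1::real" and mu=mu and t=t] by simp

lemma Amat_mu:
  assumes "k < K"
  shows "Amat h K lam (mu(k := mu k + t)) = Amat h K lam mu + t *\<^sub>R (- outer (h k))"
proof -
  have e: "(\<Sum>i<K. (mu(k := mu k + t)) i *\<^sub>R outer (h i)) = (\<Sum>i<K. mu i *\<^sub>R outer (h i)) + t *\<^sub>R outer (h k)"
    by (rule sum_upd[OF assms])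
  show ?thesis unfolding Amat_def e by (simp add: algebra_simps)
qed

lemma trA: "Re (trace (Amat h K lam mu ** S)) = lam * Re (trace S) - (\<Sum>k<K. mu k * Re (qform S (h k)))"
proof -
  have "Amat h K lam mu ** S = lam *\<^sub>R S - (\<Sum>k<K. mu k *\<^sub>R (outer (h k) ** S))"
    by (simp add: Amat_def matrix_sub_rdistrib' sum_mm_left scaleR_mm_left)
  moreover have "trace (outer (h k) ** S) = qform S (h k)" for k
    unfolding qform_trace by (rule trace_mul_sym)
  ultimately show ?thesis
    by (simp add: trace_sub trace_sum trace_scaleR Re_sum)
qed

lemma R1:
  fixes x C t0 :: real
  assumes "0 < t0" "\<And>t. 0 < t \<Longrightarrow> t < t0 \<Longrightarrow> t * x \<le> C * t^2"
  shows "x \<le> 0"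
proof (rule ccontr)
  assume "\<not> x \<le> 0"
  then have x: "0 < x" by simp
  have M: "0 < 2 * (\<bar>C\<bar> + 1)" by simp
  define u where "u = x / (2 * (\<bar>C\<bar> + 1))"
  have u: "0 < u" unfolding u_def using x M by (rule divide_pos_pos)
  have ux: "u * (2 * (\<bar>C\<bar> + 1)) = x" unfolding u_def using M by simp
  define t where "t = min (t0 / 2) u"
  have t: "0 < t" "t < t0" using u assms(1) by (auto simp: t_def)
  have "t \<le> u" by (simp add: t_def)
  then have "t * (2 * (\<bar>C\<bar> + 1)) \<le> x" using M ux by (metis mult_right_mono less_imp_le)
  moreover have "C * t \<le> \<bar>C\<bar> * t" using t(1) by (intro mult_right_mono) auto
  moreover have "\<bar>C\<bar> * t < (2 * (\<bar>C\<bar> + 1)) * t" using t(1) by (intro mult_strict_right_mono) auto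
  ultimately have "C * t < x" by (simp add: mult.commute)
  then have "C * t^2 < t * x" using t(1) by (simp add: power2_eq_square mult_ac)
  with assms(2)[OF t] show False by simp
qed

lemma R2:
  fixes x C t1 :: real
  assumes "0 < t1" "\<And>t. - t1 < t \<Longrightarrow> t < 0 \<Longrightarrow> t * x \<le> C * t^2"
  shows "0 \<le> x"
proof -
  have "- x \<le> 0"
  proof (rule R1[OF assms(1)])
    fix t :: real assume "0 < t" "t < t1"
    then show "t * - x \<le> C * t^2" using assms(2)[of "- t"] by simp
  qed
  then show ?thesis by simp
qed


lemma herm_neg: "hermitian A \<Longrightarrow> hermitian (- A)"
  unfolding hermitian_def cadj_def vec_eq_iff by simp

lemma trace_neg_outer: "Re (trace ((- outer v) ** S)) = - Re (qform S v)"
proof -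
  have e1: "trace ((- outer v) ** S) = - trace (outer v ** S)"
    unfolding trace_def matrix_matrix_mult_def by (simp add: sum_negf)
  have e2: "trace (outer v ** S) = qform S v"
    unfolding qform_trace by (rule trace_mul_sym)
  show ?thesis unfolding e1 e2 by simp
qed

theorem proposition1:
  fixes h :: "nat \<Rightarrow> complex^('n::{finite,linorder})"
    and K :: nat and \<Gamma> P lam :: real and mu :: "nat \<Rightarrow> real"
    and U :: "complex^('n::{finite,linorder})^('n::{finite,linorder})" and \<alpha> :: "'n \<Rightarrow> real"
  assumes "K \<ge> 1" and "\<Gamma> \<ge> 0" and "P > 0"
    and "strictly_feasible h K \<Gamma> P"
    and "dual_optimal h K \<Gamma> P lam mu"
    and "unitary U"
    and "Amat h K lam mu = U ** cdiag (\<lambda>i. complex_of_real (\<alpha> i)) ** cadj U"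
    and "\<And>i j. i \<le> j \<Longrightarrow> \<alpha> j \<le> \<alpha> i"
  shows "rank (Amat h K lam mu) = CARD('n) \<and> (\<forall>i. \<alpha> i > 0) \<and>
    primal_optimal h K \<Gamma> P (U ** cdiag (\<lambda>i. complex_of_real (\<alpha> i powr (-1/2))) ** cadj U)"
proof -
  note U = assms(6)
  have lam0: "0 \<le> lam" and mu0: "\<forall>k<K. 0 \<le> mu k"
    and dmax: "\<And>lam' mu'. 0 \<le> lam' \<Longrightarrow> (\<forall>k<K. 0 \<le> mu' k) \<Longrightarrow>
        dual_fun h K \<Gamma> P lam' mu' \<le> dual_fun h K \<Gamma> P lam mu"
    using assms(5) unfolding dual_optimal_def by auto
  have Aeq: "Amat h K lam mu = ud U \<alpha>" using assms(7) by (simp add: ud_def)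
  have g_le: "dual_fun h K \<Gamma> P lam' mu' \<le> lagrangian h K \<Gamma> P S lam' mu'" if "psd S" for S lam' mu'
    unfolding dual_fun_def by (rule INF_lower) (simp add: that)
  have g_ge: "ereal c \<le> dual_fun h K \<Gamma> P lam' mu'"
    if "\<And>S. psd S \<Longrightarrow> ereal c \<le> lagrangian h K \<Gamma> P S lam' mu'" for c lam' mu'
    unfolding dual_fun_def by (rule INF_greatest) (simp add: that)
  define G where "G = \<Gamma> * (\<Sum>k<K. mu k)"

  have apos: "\<forall>i. 0 < \<alpha> i"
  proof (rule ccontr)
    assume "\<not> (\<forall>i. 0 < \<alpha> i)"
    then obtain i0 where i0: "\<alpha> i0 \<le> 0" by (auto simp: not_less)
    define j where "j = Max (UNIV :: 'n set)"
    have jmin: "\<alpha> j \<le> \<alpha> i" for i using assms(8)[of i j] by (simp add: j_def)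
    have aj: "\<alpha> j \<le> 0" using jmin[of i0] i0 by simp
    define \<delta> where "\<delta> = - \<alpha> j + 1 / (4 * P^2)"
    have q: "0 < 1 / (4 * P^2)" using assms(3) by simp
    have \<delta>: "0 < \<delta>" unfolding \<delta>_def using q aj by linarith
    define \<beta> where "\<beta> i = \<alpha> i + \<delta>" for i
    have \<beta>j: "\<beta> j = 1 / (4 * P^2)" by (simp add: \<beta>_def \<delta>_def)
    have \<beta>pos: "0 < \<beta> i" for i
    proof -
      have "\<beta> j \<le> \<beta> i" using jmin[of i] by (simp add: \<beta>_def)
      moreover have "0 < \<beta> j" using assms(3) by (simp add: \<beta>j)
      ultimately show ?thesis by linarith
    qed
    define b where "b i = sqrt (\<beta> i)" for i
    have bpos: "0 < b i" for i using \<beta>pos[of i] by (simp add: b_def)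
    have bsq: "(b i)^2 = \<beta> i" for i using \<beta>pos[of i] by (simp add: b_def)
    have bj: "b j = 1 / (2 * P)"
    proof -
      have "(1 / (2 * P))^2 = \<beta> j" by (simp add: \<beta>j power2_eq_square)
      then have "b j = sqrt ((1 / (2 * P))^2)" by (simp add: b_def)
      also have "\<dots> = \<bar>1 / (2 * P)\<bar>" by (rule real_sqrt_abs)
      also have "\<dots> = 1 / (2 * P)" using assms(3) by simp
      finally show ?thesis .
    qed
    have Ash: "Amat h K (lam + \<delta>) mu = ud U \<beta>"
    proof -
      have "\<beta> = (\<lambda>i. \<alpha> i + \<delta>)" by (rule ext) (simp add: \<beta>_def)
      then show ?thesis by (simp add: Amat_lam Aeq ud_add_const[OF U])
    qed
    have low: "ereal (2 * (\<Sum>i\<in>UNIV. b i) + G - (lam + \<delta>) * P) \<le> dual_fun h K \<Gamma> P (lam + \<delta>) mu"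
    proof (rule g_ge)
      fix S :: "complex^('n::{finite,linorder})^('n::{finite,linorder})" assume S: "psd S"
      have "ereal (2 * (\<Sum>i\<in>UNIV. sqrt (\<beta> i))) \<le> obj S + ereal (Re (trace (ud U \<beta> ** S)))"
        by (rule LB[OF U _ S], rule order_less_imp_le[OF \<beta>pos])
      then have "ereal (2 * (\<Sum>i\<in>UNIV. sqrt (\<beta> i)) + (G - (lam + \<delta>) * P))
          \<le> obj S + ereal (Re (trace (ud U \<beta> ** S)) + (G - (lam + \<delta>) * P))"
        by (rule ereal_shift)
      then show "ereal (2 * (\<Sum>i\<in>UNIV. b i) + G - (lam + \<delta>) * P) \<le> lagrangian h K \<Gamma> P S (lam + \<delta>) mu"
        unfolding lagr Ash by (simp add: b_def G_def algebra_simps)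
    qed
    define d where "d i = 1 / b i" for i
    have dpos: "0 < d i" for i using bpos[of i] by (simp add: d_def)
    have up: "dual_fun h K \<Gamma> P lam mu \<le> ereal ((\<Sum>i\<in>UNIV. b i) + G + (\<Sum>i\<in>UNIV. \<alpha> i / b i) - lam * P)"
    proof -
      have "dual_fun h K \<Gamma> P lam mu \<le> lagrangian h K \<Gamma> P (ud U d) lam mu"
        by (rule g_le[OF psd_ud[OF U]], rule order_less_imp_le[OF dpos])
      also have "\<dots> = ereal ((\<Sum>i\<in>UNIV. b i) + G + (\<Sum>i\<in>UNIV. \<alpha> i / b i) - lam * P)"
        unfolding lagr Aeq ud_mult[OF U] obj_ud[OF U dpos]
        by (simp add: trace_ud[OF U] Re_sum d_def G_def)
      finally show ?thesis .
    qed
    have real: "(\<Sum>i\<in>UNIV. b i) + G + (\<Sum>i\<in>UNIV. \<alpha> i / b i) - lam * P < 2 * (\<Sum>i\<in>UNIV. b i) + G - (lam + \<delta>) * P"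
    proof -
      have e: "\<alpha> i / b i = b i - \<delta> / b i" for i
      proof -
        have "\<alpha> i = (b i)^2 - \<delta>" by (simp add: bsq \<beta>_def)
        then show ?thesis using bpos[of i] by (simp add: field_simps power2_eq_square)
      qed
      have s: "(\<Sum>i\<in>UNIV. \<alpha> i / b i) = (\<Sum>i\<in>UNIV. b i) - (\<Sum>i\<in>UNIV. \<delta> / b i)"
        by (simp add: e sum_subtractf)
      have "\<delta> / b j \<le> (\<Sum>i\<in>UNIV. \<delta> / b i)"
        by (rule member_le_sum) (use \<delta> bpos in \<open>auto intro: divide_nonneg_pos order_less_imp_le\<close>)
      moreover have "\<delta> / b j = \<delta> * (2 * P)" by (simp add: bj)
      moreover have "0 < \<delta> * P" using \<delta> assms(3) by simp
      ultimately show ?thesis unfolding s by (simp add: algebra_simps)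
    qed
    have "dual_fun h K \<Gamma> P (lam + \<delta>) mu \<le> dual_fun h K \<Gamma> P lam mu"
      by (rule dmax) (use lam0 mu0 \<delta> in auto)
    with low up have "ereal (2 * (\<Sum>i\<in>UNIV. b i) + G - (lam + \<delta>) * P)
        \<le> ereal ((\<Sum>i\<in>UNIV. b i) + G + (\<Sum>i\<in>UNIV. \<alpha> i / b i) - lam * P)"
      by (meson order_trans)
    with real show False by simp
  qed

  define a where "a i = sqrt (\<alpha> i)" for i
  have apos': "0 < a i" for i using apos by (simp add: a_def)
  have ale: "0 \<le> \<alpha> i" for i using apos order_less_imp_le by blast
  have asq: "(a i)^2 = \<alpha> i" for i using ale[of i] by (simp add: a_def)
  have Aeq2: "Amat h K lam mu = ud U (\<lambda>i. (a i)^2)" using Aeq asq by simp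
  have pw: "\<alpha> i powr (-1/2) = 1 / a i" for i
  proof -
    have ai: "0 \<le> \<alpha> i" by (rule ale)
    have s: "\<alpha> i powr (1/2) = sqrt (\<alpha> i)" by (rule powr_half_sqrt[OF ai])
    have "\<alpha> i powr (-1/2) = \<alpha> i powr (- (1/2))" by simp
    also have "\<dots> = inverse (\<alpha> i powr (1/2))" by (rule powr_minus)
    finally have "\<alpha> i powr (-1/2) = inverse (sqrt (\<alpha> i))" unfolding s .
    then show ?thesis by (simp add: a_def inverse_eq_divide)
  qed
  define S0 where "S0 = ud U (\<lambda>i. 1 / a i)"
  have S0eq: "U ** cdiag (\<lambda>i. complex_of_real (\<alpha> i powr (-1/2))) ** cadj U = S0"
    unfolding S0_def ud_def pw by simp
  have rank: "rank (Amat h K lam mu) = CARD('n)"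
  proof -
    have "invertible (ud U \<alpha>)" by (rule ud_inv[OF U]) (metis apos less_irrefl)
    then show ?thesis unfolding Aeq by (rule rank_inv)
  qed
  have d1: "\<And>i. 0 < 1 / a i" using apos' by simp
  have objS0: "obj S0 = ereal (\<Sum>i\<in>UNIV. a i)"
    unfolding S0_def obj_ud[OF U d1] by simp
  have trAS0: "Re (trace (Amat h K lam mu ** S0)) = (\<Sum>i\<in>UNIV. a i)"
  proof -
    have "Re (trace (Amat h K lam mu ** S0)) = (\<Sum>i\<in>UNIV. (a i)^2 * (1 / a i))"
      unfolding Aeq2 S0_def ud_mult[OF U] by (simp add: trace_ud[OF U] Re_sum)
    also have "\<dots> = (\<Sum>i\<in>UNIV. a i)" using apos' by (simp add: power2_eq_square)
    finally show ?thesis .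
  qed
  define V where "V = 2 * (\<Sum>i\<in>UNIV. a i) + G - lam * P"
  have up0: "dual_fun h K \<Gamma> P lam mu \<le> ereal V"
  proof -
    have "dual_fun h K \<Gamma> P lam mu \<le> lagrangian h K \<Gamma> P S0 lam mu"
      unfolding S0_def by (rule g_le, rule psd_ud[OF U], rule order_less_imp_le[OF d1])
    also have "\<dots> = ereal V" unfolding lagr objS0 trAS0 by (simp add: V_def G_def)
    finally show ?thesis .
  qed

  have pert: "\<exists>C t0. 0 < t0 \<and> (\<forall>t lam' mu'. \<bar>t\<bar> < t0 \<longrightarrow> 0 \<le> lam' \<longrightarrow> (\<forall>k<K. 0 \<le> mu' k) \<longrightarrow>
      Amat h K lam' mu' = Amat h K lam mu + t *\<^sub>R E \<longrightarrow>
      t * Re (trace (E ** S0)) - C * t^2 + \<Gamma> * (\<Sum>k<K. mu' k) - lam' * P \<le> G - lam * P)"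
    if hE: "hermitian E" for E
  proof -
    obtain C t0 where t0: "0 < t0" and PLf: "\<And>t S. \<bar>t\<bar> < t0 \<Longrightarrow> psd S \<Longrightarrow>
        ereal (2 * (\<Sum>i\<in>UNIV. a i) + t * Re (trace (E ** ud U (\<lambda>i. 1 / a i))) - C * t^2)
          \<le> obj S + ereal (Re (trace ((ud U (\<lambda>i. (a i)^2) + t *\<^sub>R E) ** S)))"
      using PL[where a=a and U=U and E=E, OF U apos' hE] by blast
    show ?thesis
    proof (intro exI conjI allI impI)
      show "0 < t0" by (rule t0)
      fix t lam' mu' assume tt: "\<bar>t\<bar> < t0" and l': "0 \<le> lam'" and m': "\<forall>k<K. 0 \<le> mu' k"
        and Am: "Amat h K lam' mu' = Amat h K lam mu + t *\<^sub>R E"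
      have "ereal (2 * (\<Sum>i\<in>UNIV. a i) + t * Re (trace (E ** S0)) - C * t^2 + (\<Gamma> * (\<Sum>k<K. mu' k) - lam' * P))
          \<le> dual_fun h K \<Gamma> P lam' mu'"
      proof (rule g_ge)
        fix S :: "complex^('n::{finite,linorder})^('n::{finite,linorder})" assume S: "psd S"
        have "ereal (2 * (\<Sum>i\<in>UNIV. a i) + t * Re (trace (E ** S0)) - C * t^2)
            \<le> obj S + ereal (Re (trace (Amat h K lam' mu' ** S)))"
          using PLf[OF tt S] by (simp add: Am Aeq2 S0_def)
        then have "ereal (2 * (\<Sum>i\<in>UNIV. a i) + t * Re (trace (E ** S0)) - C * t^2 + (\<Gamma> * (\<Sum>k<K. mu' k) - lam' * P))
            \<le> obj S + ereal (Re (trace (Amat h K lam' mu' ** S)) + (\<Gamma> * (\<Sum>k<K. mu' k) - lam' * P))"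
          by (rule ereal_shift)
        then show "ereal (2 * (\<Sum>i\<in>UNIV. a i) + t * Re (trace (E ** S0)) - C * t^2 + (\<Gamma> * (\<Sum>k<K. mu' k) - lam' * P))
            \<le> lagrangian h K \<Gamma> P S lam' mu'"
          unfolding lagr by (simp add: algebra_simps)
      qed
      also have "\<dots> \<le> dual_fun h K \<Gamma> P lam mu" by (rule dmax[OF l' m'])
      also note up0
      finally show "t * Re (trace (E ** S0)) - C * t^2 + \<Gamma> * (\<Sum>k<K. mu' k) - lam' * P \<le> G - lam * P"
        by (simp add: V_def)
    qed
  qed

  obtain C1 t1 where t1: "0 < t1" and P1: "\<forall>t lam' mu'. \<bar>t\<bar> < t1 \<longrightarrow> 0 \<le> lam' \<longrightarrow> (\<forall>k<K. 0 \<le> mu' k) \<longrightarrow>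
      Amat h K lam' mu' = Amat h K lam mu + t *\<^sub>R mat 1 \<longrightarrow>
      t * Re (trace (mat 1 ** S0)) - C1 * t^2 + \<Gamma> * (\<Sum>k<K. mu' k) - lam' * P \<le> G - lam * P"
    using pert[OF herm_mat1] by blast
  have lamdir: "t * (Re (trace S0) - P) \<le> C1 * t^2" if "\<bar>t\<bar> < t1" "0 \<le> lam + t" for t
  proof -
    have "t * Re (trace (mat 1 ** S0)) - C1 * t^2 + \<Gamma> * (\<Sum>k<K. mu k) - (lam + t) * P \<le> G - lam * P"
      using P1 that mu0 by (simp add: Amat_lam)
    then show ?thesis by (simp add: G_def algebra_simps)
  qed
  have trS0: "Re (trace S0) \<le> P"
  proof -
    have "Re (trace S0) - P \<le> 0"
      by (rule R1[OF t1]) (use lam0 in \<open>auto intro!: lamdir\<close>)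
    then show ?thesis by simp
  qed
  have cs_lam: "lam * Re (trace S0) = lam * P"
  proof (cases "lam = 0")
    case False
    then have lp: "0 < lam" using lam0 by simp
    have "0 \<le> Re (trace S0) - P"
    proof (rule R2[of "min t1 lam"])
      show "0 < min t1 lam" using t1 lp by simp
      fix t :: real assume "- min t1 lam < t" "t < 0"
      then show "t * (Re (trace S0) - P) \<le> C1 * t^2" by (intro lamdir) auto
    qed
    then show ?thesis using trS0 by simp
  qed simp

  have mudir: "\<Gamma> \<le> Re (qform S0 (h k)) \<and> mu k * Re (qform S0 (h k)) = mu k * \<Gamma>" if k: "k < K" for k
  proof -
    obtain C2 t2 where t2: "0 < t2" and P2: "\<forall>t lam' mu'. \<bar>t\<bar> < t2 \<longrightarrow> 0 \<le> lam' \<longrightarrow> (\<forall>k<K. 0 \<le> mu' k) \<longrightarrow>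
      Amat h K lam' mu' = Amat h K lam mu + t *\<^sub>R (- outer (h k)) \<longrightarrow>
      t * Re (trace ((- outer (h k)) ** S0)) - C2 * t^2 + \<Gamma> * (\<Sum>k<K. mu' k) - lam' * P \<le> G - lam * P"
      using pert[OF herm_neg[OF herm_outer]] by blast
    have dir: "t * (\<Gamma> - Re (qform S0 (h k))) \<le> C2 * t^2" if tt: "\<bar>t\<bar> < t2" "0 \<le> mu k + t" for t
    proof -
      have m': "\<forall>i<K. 0 \<le> (mu(k := mu k + t)) i" using mu0 tt(2) by auto
      have "t * Re (trace ((- outer (h k)) ** S0)) - C2 * t^2 + \<Gamma> * (\<Sum>i<K. (mu(k := mu k + t)) i) - lam * P \<le> G - lam * P"
        using P2 tt(1) lam0 m' Amat_mu[OF k] by blast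
      then show ?thesis unfolding sum_upd_real[OF k] trace_neg_outer by (simp add: G_def algebra_simps)
    qed
    have f: "\<Gamma> - Re (qform S0 (h k)) \<le> 0"
      by (rule R1[OF t2]) (use mu0 k in \<open>auto intro!: dir\<close>)
    have "mu k * Re (qform S0 (h k)) = mu k * \<Gamma>"
    proof (cases "mu k = 0")
      case False
      then have mp: "0 < mu k" using mu0 k by (metis less_eq_real_def)
      have "0 \<le> \<Gamma> - Re (qform S0 (h k))"
      proof (rule R2[of "min t2 (mu k)"])
        show "0 < min t2 (mu k)" using t2 mp by simp
        fix t :: real assume "- min t2 (mu k) < t" "t < 0"
        then show "t * (\<Gamma> - Re (qform S0 (h k))) \<le> C2 * t^2" by (intro dir) auto
      qed
      then show ?thesis using f by simp
    qed simp
    with f show ?thesis by simp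
  qed

  have psdS0: "psd S0" unfolding S0_def by (rule psd_ud[OF U], rule order_less_imp_le[OF d1])
  have feas: "feasible h K \<Gamma> P S0"
    using psdS0 trS0 mudir by (simp add: feasible_def)
  have sumA: "(\<Sum>i\<in>UNIV. a i) = lam * P - G"
  proof -
    have "(\<Sum>k<K. mu k * Re (qform S0 (h k))) = (\<Sum>k<K. mu k * \<Gamma>)"
      by (rule sum.cong) (use mudir in auto)
    also have "\<dots> = G" by (simp add: G_def sum_distrib_left mult.commute)
    finally have e: "(\<Sum>k<K. mu k * Re (qform S0 (h k))) = G" .
    show ?thesis
      using trAS0 trA[of h K lam mu S0] cs_lam e by linarith
  qed
  have opt: "obj S0 \<le> obj S'" if fS': "feasible h K \<Gamma> P S'" for S'
  proof -
    have S': "psd S'" "\<forall>k<K. \<Gamma> \<le> Re (qform S' (h k))" "Re (trace S') \<le> P"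
      using fS' by (auto simp: feasible_def)
    have "ereal (2 * (\<Sum>i\<in>UNIV. sqrt (\<alpha> i))) \<le> obj S' + ereal (Re (trace (ud U \<alpha> ** S')))"
      by (rule LB[OF U _ S'(1)], rule ale)
    moreover have "Re (trace (ud U \<alpha> ** S')) \<le> lam * P - G"
    proof -
      have "lam * Re (trace S') \<le> lam * P" using S'(3) lam0 by (rule mult_left_mono)
      moreover have "(\<Sum>k<K. mu k * \<Gamma>) \<le> (\<Sum>k<K. mu k * Re (qform S' (h k)))"
        by (rule sum_mono) (use S'(2) mu0 in \<open>auto intro: mult_left_mono\<close>)
      moreover have "(\<Sum>k<K. mu k * \<Gamma>) = G" by (simp add: G_def sum_distrib_left mult.commute)
      moreover have "Re (trace (ud U \<alpha> ** S')) = lam * Re (trace S') - (\<Sum>k<K. mu k * Re (qform S' (h k)))"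
        using trA[of h K lam mu S'] unfolding Aeq .
      ultimately show ?thesis by linarith
    qed
    ultimately have "ereal (2 * (\<Sum>i\<in>UNIV. a i)) \<le> obj S' + ereal (\<Sum>i\<in>UNIV. a i)"
      unfolding sumA[symmetric] a_def
      by (meson add_left_mono ereal_less_eq(3) order_trans)
    then show ?thesis unfolding objS0 using obj_cases[of S'] by auto
  qed
  show ?thesis
    unfolding S0eq using rank apos feas opt by (simp add: primal_optimal_def)
qed


end
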